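(* Let $p,q$ be squarefree positive integers such that $K=\mathbb{Q}(\sqrt p,\sqrt q)$ has degree $4$ over $\mathbb{Q}$, and let $r=\frac{pq}{\gcd(p,q)^2}$. Suppose that $\alpha=a+b\sqrt p+c\sqrt q+d\sqrt r$ (with $a,b,c,d\in\mathbb{Q}$) is a totally positive element of the ring of integers $\mathcal{O}_K$, and let $\mathrm{Tr}$ denote the trace from $K$ to $\mathbb{Q}$. Then: (1) if $b\neq 0$, then $\mathrm{Tr}(\alpha)>\sqrt p$; (2) if $c\neq 0$, then $\mathrm{Tr}(\alpha)>\sqrt q$; (3) if $d\neq 0$, then $\mathrm{Tr}(\alpha)>\sqrt r$. Finally, if $\alpha\notin\mathbb{Z}$, then $\mathrm{Tr}(\alpha)>\min(\sqrt p,\sqrt q,\sqrt r)$.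
   Context: An element of $K$ is totally positive if all of its images under the four real embeddings of $K$ are positive. *)

theory Defs
  imports "HOL-Analysis.Analysis" "HOL-Computational_Algebra.Computational_Algebra"
begin

text \<open>With
  r = pq / gcd(p,q)^2 we have sqrt r = sqrt p * sqrt q / gcd(p,q), so the four real
  embeddings send sqrt p to s sqrt p, sqrt q to t sqrt q and sqrt r to s t sqrt r,
  for signs s, t in {1, -1}.\<close>

definition biq_r :: "nat \<Rightarrow> nat \<Rightarrow> nat" where
  "biq_r p q = (p * q) div (gcd p q)^2"

definition biq_elem :: "nat \<Rightarrow> nat \<Rightarrow> real \<Rightarrow> real \<Rightarrow> real \<Rightarrow> real \<Rightarrow> real" where
  "biq_elem p q a b c d = a + b * sqrt p + c * sqrt q + d * sqrt (biq_r p q)"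

definition biq_emb :: "nat \<Rightarrow> nat \<Rightarrow> real \<Rightarrow> real \<Rightarrow> real \<Rightarrow> real \<Rightarrow> real \<Rightarrow> real \<Rightarrow> real" where
  "biq_emb p q s t a b c d = a + s * b * sqrt p + t * c * sqrt q + s * t * d * sqrt (biq_r p q)"

definition biq_signs :: "real set" where
  "biq_signs = {1, -1}"

definition biq_degree4 :: "nat \<Rightarrow> nat \<Rightarrow> bool" where
  "biq_degree4 p q \<longleftrightarrow> (\<forall>a b c d. a \<in> \<rat> \<and> b \<in> \<rat> \<and> c \<in> \<rat> \<and> d \<in> \<rat> \<and>
      biq_elem p q a b c d = 0 \<longrightarrow> a = 0 \<and> b = 0 \<and> c = 0 \<and> d = 0)"

definition biq_totally_positive :: "nat \<Rightarrow> nat \<Rightarrow> real \<Rightarrow> real \<Rightarrow> real \<Rightarrow> real \<Rightarrow> bool" where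
  "biq_totally_positive p q a b c d \<longleftrightarrow>
     (\<forall>s\<in>biq_signs. \<forall>t\<in>biq_signs. biq_emb p q s t a b c d > 0)"

definition biq_trace :: "nat \<Rightarrow> nat \<Rightarrow> real \<Rightarrow> real \<Rightarrow> real \<Rightarrow> real \<Rightarrow> real" where
  "biq_trace p q a b c d = (\<Sum>s\<in>biq_signs. \<Sum>t\<in>biq_signs. biq_emb p q s t a b c d)"

end

theory Submission
  imports Defs "Jordan_Normal_Form.Char_Poly"
begin

lemma det_trick:
  fixes x :: real and v :: "nat \<Rightarrow> real" and M :: "nat \<Rightarrow> nat \<Rightarrow> int"
  assumes i0: "i0 < N" "v i0 \<noteq> 0"
    and eq: "\<And>i. i < N \<Longrightarrow> x * v i = (\<Sum>j<N. of_int (M i j) * v j)"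
  shows "algebraic_int x"
proof -
  define A :: "int mat" where "A = mat N N (\<lambda>(i,j). M i j)"
  have A: "A \<in> carrier_mat N N" by (simp add: A_def)
  define B :: "real mat" where "B = of_int_hom.mat_hom A"
  have B: "B \<in> carrier_mat N N" using A by (simp add: B_def)
  define w where "w = vec N v"
  have "eigenvector B w x"
    unfolding eigenvector_def
  proof (intro conjI)
    show "w \<in> carrier_vec (dim_row B)" using B by (simp add: w_def)
    show "w \<noteq> 0\<^sub>v (dim_row B)"
    proof
      assume "w = 0\<^sub>v (dim_row B)"
      then have "w $ i0 = 0" using B i0 by simp
      then show False using i0 by (simp add: w_def)
    qed
    show "B *\<^sub>v w = x \<cdot>\<^sub>v w"
    proof (rule eq_vecI)
      fix i assume "i < dim_vec (x \<cdot>\<^sub>v w)"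
      then have i: "i < N" by (simp add: w_def)
      have "(B *\<^sub>v w) $ i = (\<Sum>j<N. of_int (M i j) * v j)"
        using i B unfolding B_def A_def w_def
        by (simp add: mult_mat_vec_def scalar_prod_def row_def lessThan_atLeast0)
      also have "\<dots> = x * v i" using eq[OF i] by simp
      finally show "(B *\<^sub>v w) $ i = (x \<cdot>\<^sub>v w) $ i" using i by (simp add: w_def)
    qed (simp add: w_def B_def A_def)
  qed
  then have "eigenvalue B x" by (auto simp: eigenvalue_def)
  then have "poly (char_poly B) x = 0" using eigenvalue_root_char_poly[OF B] by simp
  moreover have "char_poly B = of_int_poly (char_poly A)" unfolding B_def by (rule of_int_hom.char_poly_hom[OF A])
  ultimately have "poly (of_int_poly (char_poly A)) x = 0" by simp
  moreover have "lead_coeff (char_poly A) = 1" using degree_monic_char_poly[OF A] by simp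
  ultimately show ?thesis unfolding algebraic_int_altdef_ipoly by blast
qed

definition zspan :: "real set \<Rightarrow> real set" where
  "zspan G = {y. \<exists>c. y = (\<Sum>g\<in>G. of_int (c g) * g)}"

lemma zspan_0: "0 \<in> zspan G"
  unfolding zspan_def by (rule CollectI, rule exI[of _ "\<lambda>_. 0"]) simp

lemma zspan_add: "y \<in> zspan G \<Longrightarrow> z \<in> zspan G \<Longrightarrow> y + z \<in> zspan G"
proof -
  assume "y \<in> zspan G" "z \<in> zspan G"
  then obtain c d where "y = (\<Sum>g\<in>G. of_int (c g) * g)" "z = (\<Sum>g\<in>G. of_int (d g) * g)"
    unfolding zspan_def by blast
  then have "y + z = (\<Sum>g\<in>G. of_int (c g + d g) * g)"
    by (simp add: sum.distrib distrib_right)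
  then show ?thesis unfolding zspan_def by (intro CollectI exI[of _ "\<lambda>g. c g + d g"]) simp
qed

lemma zspan_smult: "y \<in> zspan G \<Longrightarrow> of_int k * y \<in> zspan G"
proof -
  assume "y \<in> zspan G"
  then obtain c where "y = (\<Sum>g\<in>G. of_int (c g) * g)"
    unfolding zspan_def by blast
  then have "of_int k * y = (\<Sum>g\<in>G. of_int (k * c g) * g)"
    by (simp add: sum_distrib_left mult.assoc)
  then show ?thesis unfolding zspan_def by (intro CollectI exI[of _ "\<lambda>g. k * c g"]) simp
qed

lemma zspan_sum: "finite A \<Longrightarrow> (\<And>a. a \<in> A \<Longrightarrow> f a \<in> zspan G) \<Longrightarrow> sum f A \<in> zspan G"
  by (induction A rule: finite_induct) (auto intro: zspan_add zspan_0)

lemma zspan_gen: "finite G \<Longrightarrow> g \<in> G \<Longrightarrow> g \<in> zspan G"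
proof -
  assume G: "finite G" "g \<in> G"
  have "(\<Sum>h\<in>G. of_int (if h = g then 1 else 0) * h) = (\<Sum>h\<in>G. if h = g then g else 0)"
    by (rule sum.cong) auto
  also have "\<dots> = g" using G by simp
  finally show ?thesis unfolding zspan_def by (intro CollectI exI[of _ "\<lambda>h. if h = g then 1 else 0"]) simp
qed

definition stab :: "real set \<Rightarrow> real \<Rightarrow> bool" where
  "stab G x \<longleftrightarrow> (\<forall>z\<in>zspan G. x * z \<in> zspan G)"

lemma stabI:
  assumes "finite G" "\<And>g. g \<in> G \<Longrightarrow> x * g \<in> zspan G"
  shows "stab G x"
  unfolding stab_def
proof
  fix z assume "z \<in> zspan G"
  then obtain c where z: "z = (\<Sum>g\<in>G. of_int (c g) * g)"
    unfolding zspan_def by blast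
  have "x * z = (\<Sum>g\<in>G. of_int (c g) * (x * g))"
    unfolding z by (simp add: sum_distrib_left algebra_simps)
  also have "\<dots> \<in> zspan G"
    using assms by (intro zspan_sum zspan_smult) auto
  finally show "x * z \<in> zspan G" .
qed

lemma stab_add: "stab G x \<Longrightarrow> stab G y \<Longrightarrow> stab G (x + y)"
  unfolding stab_def by (auto simp: distrib_right intro: zspan_add)

lemma stab_mult: "stab G x \<Longrightarrow> stab G y \<Longrightarrow> stab G (x * y)"
  unfolding stab_def by (metis mult.assoc)

lemma stab_of_int: "stab G (of_int k)"
  unfolding stab_def by (auto intro: zspan_smult)

lemma stab_minus: "stab G x \<Longrightarrow> stab G (- x)"
proof -
  assume "stab G x"
  moreover have "stab G (of_int (-1))" by (rule stab_of_int)
  ultimately have "stab G (of_int (-1) * x)" by (rule stab_mult[rotated])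
  then show ?thesis by simp
qed

lemma stab_diff: "stab G x \<Longrightarrow> stab G y \<Longrightarrow> stab G (x - y)"
  using stab_add[of G x "-y"] stab_minus[of G y] by simp

lemma stab_alg:
  assumes G: "finite G" "g0 \<in> G" "g0 \<noteq> 0" and x: "stab G x"
  shows "algebraic_int x"
proof -
  define l where "l = sorted_list_of_set G"
  have dl: "distinct l" and sl: "set l = G" using G by (auto simp: l_def)
  define N where "N = length l"
  have bij: "bij_betw ((!) l) {..<N} G"
    by (rule bij_betw_nth) (use dl sl N_def in auto)
  have reidx: "\<And>f. (\<Sum>g\<in>G. f g) = (\<Sum>j<N. f (l ! j))"
    using sum.reindex_bij_betw[OF bij] by (metis (no_types))
  obtain i0 where i0: "i0 < N" "l ! i0 = g0" using G(2) sl by (metis N_def in_set_conv_nth)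
  have ex: "\<forall>i. \<exists>c. i < N \<longrightarrow> x * (l ! i) = (\<Sum>g\<in>G. of_int (c g) * g)"
  proof
    fix i
    show "\<exists>c. i < N \<longrightarrow> x * (l ! i) = (\<Sum>g\<in>G. of_int (c g) * g)"
    proof (cases "i < N")
      case True
      then have "l ! i \<in> G" using sl N_def by auto
      then have "l ! i \<in> zspan G" using zspan_gen G by auto
      then have "x * (l ! i) \<in> zspan G" using x unfolding stab_def by auto
      then show ?thesis unfolding zspan_def by auto
    qed auto
  qed
  then obtain C where C: "\<And>i. i < N \<Longrightarrow> x * (l ! i) = (\<Sum>g\<in>G. of_int (C i g) * g)"
    by metis
  show ?thesis
  proof (rule det_trick[of i0 N "\<lambda>i. l ! i" x "\<lambda>i j. C i (l ! j)"])
    show "i0 < N" "l ! i0 \<noteq> 0" using i0 G by auto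
    fix i assume "i < N"
    then show "x * l ! i = (\<Sum>j<N. of_int (C i (l ! j)) * l ! j)"
      using C[OF \<open>i < N\<close>] reidx[of "\<lambda>g. of_int (C i g) * g"] by simp
  qed
qed

lemma poly_root_reduce:
  fixes P :: "int poly" and y :: real
  assumes "lead_coeff P = 1" "degree P = n" "poly (of_int_poly P) y = 0"
  shows "y ^ n = - (\<Sum>l<n. of_int (coeff P l) * y ^ l)"
proof -
  have "0 = (\<Sum>i\<le>n. of_int (coeff P i) * y ^ i)"
    using assms(3) by (simp add: poly_altdef assms(2))
  also have "\<dots> = (\<Sum>l<n. of_int (coeff P l) * y ^ l) + y ^ n"
    using assms(1,2) by (simp add: lessThan_Suc_atMost[symmetric])
  finally show ?thesis by linarith
qed

lemma roots_stab:
  fixes P :: "int poly" and r :: "nat \<Rightarrow> real" and m n :: nat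
  assumes P: "lead_coeff P = 1" "degree P = n" "n > 0"
    and roots: "\<And>i. i < m \<Longrightarrow> poly (of_int_poly P) (r i) = 0"
    and G: "G = (\<lambda>k. \<Prod>i<m. r i ^ k i) ` (PiE {..<m} (\<lambda>_. {..<n}))"
  shows "finite G" "1 \<in> G" "\<And>j. j < m \<Longrightarrow> stab G (r j)"
proof -
  show fin: "finite G" unfolding G by (intro finite_imageI finite_PiE) auto
  have k0: "restrict (\<lambda>_. 0) {..<m} \<in> PiE {..<m} (\<lambda>_. {..<n})" using P(3) by auto
  have k1: "1 = (\<Prod>i<m. r i ^ restrict (\<lambda>_. 0) {..<m} i)" by simp
  show "1 \<in> G" unfolding G by (rule image_eqI[where f="\<lambda>k. \<Prod>i<m. r i ^ k i", OF k1 k0])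
  fix j assume j: "j < m"
  show "stab G (r j)"
  proof (rule stabI[OF fin])
    fix g assume "g \<in> G"
    then obtain k where k: "k \<in> PiE {..<m} (\<lambda>_. {..<n})" and g: "g = (\<Prod>i<m. r i ^ k i)"
      unfolding G by blast
    define e where "e = (\<Prod>i\<in>{..<m}-{j}. r i ^ k i)"
    have split: "\<And>k'. (\<Prod>i<m. r i ^ k' i) = r j ^ k' j * (\<Prod>i\<in>{..<m}-{j}. r i ^ k' i)"
      using j by (subst prod.remove[of _ j]) auto
    have elt: "r j ^ l * e \<in> zspan G" if l: "l < n" for l
    proof -
      define k' where "k' = k(j := l)"
      have k1: "k' \<in> PiE {..<m} (\<lambda>_. {..<n})" using k l j unfolding k'_def
        by (auto simp: PiE_iff extensional_def)
      have k2: "r j ^ l * e = (\<Prod>i<m. r i ^ k' i)"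
        unfolding split[of k'] e_def by (auto simp: k'_def intro!: prod.cong)
      have "r j ^ l * e \<in> G" unfolding G by (rule image_eqI[where f="\<lambda>k. \<Prod>i<m. r i ^ k i", OF k2 k1])
      then show ?thesis using zspan_gen fin by auto
    qed
    have kj: "k j < n" using k j by auto
    have g': "r j * g = r j ^ (k j + 1) * e" unfolding g split[of k] e_def by simp
    show "r j * g \<in> zspan G"
    proof (cases "k j + 1 < n")
      case True
      then show ?thesis unfolding g' by (rule elt)
    next
      case False
      then have "k j + 1 = n" using kj by simp
      then have "r j * g = r j ^ n * e" using g' by simp
      also have "\<dots> = (\<Sum>l<n. of_int (- coeff P l) * (r j ^ l * e))"
        using poly_root_reduce[OF P(1,2) roots[OF j]]
        by (simp add: sum_distrib_right sum_distrib_left algebra_simps sum_negf)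
      also have "\<dots> \<in> zspan G" by (intro zspan_sum zspan_smult elt) auto
      finally show ?thesis .
    qed
  qed
qed

lemma sqfree_rat_int:
  fixes x :: real and n :: nat
  assumes x: "x \<in> \<rat>" and sf: "squarefree n" and n: "n > 0" and z: "x^2 * of_nat n \<in> \<int>"
  shows "x \<in> \<int>"
proof -
  obtain u v :: int where v: "v > 0" "coprime u v" and xe: "x = of_int u / of_int v"
    using x by (rule Rats_cases')
  obtain w :: int where w: "x^2 * of_nat n = of_int w" using z by (auto elim: Ints_cases)
  have "of_int u ^ 2 * of_nat n = of_int w * (of_int v ^ 2 :: real)"
    using w v unfolding xe by (simp add: field_simps power2_eq_square)
  then have "u^2 * int n = w * v^2"
    by (metis (mono_tags, lifting) of_int_eq_iff of_int_mult of_int_of_nat_eq of_int_power)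
  then have "v^2 dvd u^2 * int n" by (metis dvd_triv_right)
  moreover have "coprime (v^2) (u^2)" using v(2) by (simp add: coprime_commute)
  ultimately have "v^2 dvd int n" by (simp add: coprime_dvd_mult_right_iff)
  then have "(nat v)^2 dvd n" using v(1)
    by (metis int_dvd_int_iff int_nat_eq less_le_not_le of_nat_power)
  then have "nat v dvd 1" using sf squarefreeD by blast
  then have "v = 1" using v(1) by simp
  then show ?thesis using xe by simp
qed

lemma mult_rel:
  fixes P Q R G A B p q r a b c d a' b' c' d' :: real
  assumes "P*Q = G*R" "P*R = A*Q" "Q*R = B*P" "P*P = p" "Q*Q = q" "R*R = r"
  shows "(a + b*P + c*Q + d*R) * (a' + b'*P + c'*Q + d'*R) =
    (a*a' + p*b*b' + q*c*c' + r*d*d') + (a*b' + b*a' + B*(c*d' + d*c'))*P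
    + (a*c' + c*a' + A*(b*d' + d*b'))*Q + (a*d' + d*a' + G*(b*c' + c*b'))*R"
proof -
  have "(a + b*P + c*Q + d*R) * (a' + b'*P + c'*Q + d'*R) =
     a*a' + b*b'*(P*P) + c*c'*(Q*Q) + d*d'*(R*R) + (a*b' + b*a')*P + (c*d' + d*c')*(Q*R)
    + (a*c' + c*a')*Q + (b*d' + d*b')*(P*R) + (a*d' + d*a')*R + (b*c' + c*b')*(P*Q)"
    by (simp add: algebra_simps)
  also have "\<dots> = (a*a' + p*b*b' + q*c*c' + r*d*d') + (a*b' + b*a' + B*(c*d' + d*c'))*P
    + (a*c' + c*a' + A*(b*d' + d*b'))*Q + (a*d' + d*a' + G*(b*c' + c*b'))*R"
    unfolding assms by (simp add: algebra_simps)
  finally show ?thesis .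
qed

lemma sqrt_rels:
  fixes p q :: nat
  assumes "p > 0" "q > 0"
  defines "g \<equiv> gcd p q"
  shows "biq_r p q = (p div g) * (q div g)"
    and "sqrt p * sqrt q = g * sqrt (biq_r p q)"
    and "sqrt p * sqrt (biq_r p q) = (p div g) * sqrt q"
    and "sqrt q * sqrt (biq_r p q) = (q div g) * sqrt p"
proof -
  have g0: "g > 0" using assms by (simp add: g_def)
  obtain p' where p': "p = g * p'" unfolding g_def by (metis gcd_dvd1 dvd_def)
  obtain q' where q': "q = g * q'" unfolding g_def by (metis gcd_dvd2 dvd_def)
  have pd: "p div g = p'" using p' g0 by simp
  have qd: "q div g = q'" using q' g0 by simp
  have r0: "biq_r p q = (p * q) div (g * g)" by (simp add: biq_r_def g_def power2_eq_square)
  have pq: "p * q = (g * g) * (p' * q')" using p' q' by simp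
  have r: "biq_r p q = p' * q'" unfolding r0 pq using g0 by simp
  show "biq_r p q = (p div g) * (q div g)" using r pd qd by simp
  have e1: "real p * real q = (real g * real g) * (real p' * real q')"
    using pq by (metis of_nat_mult)
  have e2: "real p * real (biq_r p q) = (real p' * real p') * real q"
  proof -
    have "real p * real (biq_r p q) = real (p * (p' * q'))" using r by simp
    also have "\<dots> = (real p' * real p') * real q" using p' q' by simp
    finally show ?thesis .
  qed
  have e3: "real q * real (biq_r p q) = (real q' * real q') * real p"
  proof -
    have "real q * real (biq_r p q) = real (q * (p' * q'))" using r by simp
    also have "\<dots> = (real q' * real q') * real p" using p' q' by simp
    finally show ?thesis .
  qed
  show "sqrt p * sqrt q = g * sqrt (biq_r p q)"
    by (simp only: real_sqrt_mult[symmetric] e1) (simp add: real_sqrt_mult r)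
  show "sqrt p * sqrt (biq_r p q) = (p div g) * sqrt q"
    by (simp only: real_sqrt_mult[symmetric] e2) (simp add: real_sqrt_mult pd)
  show "sqrt q * sqrt (biq_r p q) = (q div g) * sqrt p"
    by (simp only: real_sqrt_mult[symmetric] e3) (simp add: real_sqrt_mult qd)
qed

lemma emb_mult:
  fixes a b c d a' b' c' d' :: real
  assumes pq: "p > 0" "q > 0" and st: "s \<in> biq_signs" "t \<in> biq_signs"
  shows "biq_emb p q s t a b c d * biq_emb p q s t a' b' c' d' =
    biq_emb p q s t (a*a' + p*b*b' + q*c*c' + biq_r p q*d*d')
      (a*b' + b*a' + real (q div gcd p q)*(c*d' + d*c'))
      (a*c' + c*a' + real (p div gcd p q)*(b*d' + d*b'))
      (a*d' + d*a' + real (gcd p q)*(b*c' + c*b'))"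
proof -
  have ss: "s * s = 1" and tt: "t * t = 1" using st by (auto simp: biq_signs_def)
  define P where "P = s * sqrt p"
  define Q where "Q = t * sqrt q"
  define R where "R = s * t * sqrt (biq_r p q)"
  have emb: "\<And>a b c d. biq_emb p q s t a b c d = a + b*P + c*Q + d*R"
    by (simp add: biq_emb_def P_def Q_def R_def algebra_simps)
  have "P*Q = (s * t) * (sqrt p * sqrt q)" unfolding P_def Q_def by (simp add: algebra_simps)
  also have "\<dots> = real (gcd p q) * R" unfolding R_def sqrt_rels(2)[OF pq] by (simp add: algebra_simps)
  finally have r1: "P*Q = real (gcd p q) * R" .
  have "P*R = (s * s) * t * (sqrt p * sqrt (biq_r p q))" unfolding P_def R_def by (simp add: algebra_simps)
  also have "\<dots> = real (p div gcd p q) * Q" unfolding Q_def sqrt_rels(3)[OF pq] ss by (simp add: algebra_simps)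
  finally have r2: "P*R = real (p div gcd p q) * Q" .
  have "Q*R = s * (t * t) * (sqrt q * sqrt (biq_r p q))" unfolding Q_def R_def by (simp add: algebra_simps)
  also have "\<dots> = real (q div gcd p q) * P" unfolding P_def sqrt_rels(4)[OF pq] tt by (simp add: algebra_simps)
  finally have r3: "Q*R = real (q div gcd p q) * P" .
  have r4: "P*P = real p" unfolding P_def using ss by (simp add: algebra_simps)
  have r5: "Q*Q = real q" unfolding Q_def using tt by (simp add: algebra_simps)
  have r6: "R*R = real (biq_r p q)" unfolding R_def using ss tt by (simp add: algebra_simps)
  show ?thesis unfolding emb by (rule mult_rel[OF r1 r2 r3 r4 r5 r6])
qed

lemma poly_emb:
  fixes Pl :: "int poly"
  assumes pq: "p > 0" "q > 0" and rat: "a \<in> \<rat>" "b \<in> \<rat>" "c \<in> \<rat>" "d \<in> \<rat>"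
  shows "\<exists>A B C D. A \<in> \<rat> \<and> B \<in> \<rat> \<and> C \<in> \<rat> \<and> D \<in> \<rat> \<and>
    (\<forall>s\<in>biq_signs. \<forall>t\<in>biq_signs.
      poly (of_int_poly Pl) (biq_emb p q s t a b c d) = biq_emb p q s t A B C D)"
proof (induction Pl)
  case 0
  show ?case by (rule exI[of _ 0])+ (simp add: biq_emb_def)
next
  case (pCons k Pl)
  then obtain A B C D where R: "A \<in> \<rat>" "B \<in> \<rat>" "C \<in> \<rat>" "D \<in> \<rat>"
    and E: "\<forall>s\<in>biq_signs. \<forall>t\<in>biq_signs.
      poly (of_int_poly Pl) (biq_emb p q s t a b c d) = biq_emb p q s t A B C D" by blast
  let ?A = "of_int k + (a*A + p*b*B + q*c*C + biq_r p q*d*D)"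
  let ?B = "a*B + b*A + real (q div gcd p q)*(c*D + d*C)"
  let ?C = "a*C + c*A + real (p div gcd p q)*(b*D + d*B)"
  let ?D = "a*D + d*A + real (gcd p q)*(b*C + c*B)"
  show ?case
  proof (intro exI conjI ballI)
    show "?A \<in> \<rat>" "?B \<in> \<rat>" "?C \<in> \<rat>" "?D \<in> \<rat>"
      using R rat by (auto intro!: Rats_add Rats_mult)
    fix s t assume st: "s \<in> biq_signs" "t \<in> biq_signs"
    have "poly (of_int_poly (pCons k Pl)) (biq_emb p q s t a b c d)
        = of_int k + biq_emb p q s t a b c d * biq_emb p q s t A B C D"
    proof -
      have mp: "(of_int_poly (pCons k Pl) :: real poly) = pCons (of_int k) (of_int_poly Pl)"
        using pCons(1) by (auto intro!: map_poly_pCons)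
      show ?thesis unfolding mp poly_pCons using E st by simp
    qed
    also have "\<dots> = biq_emb p q s t ?A ?B ?C ?D"
      unfolding emb_mult[OF pq st] by (simp add: biq_emb_def algebra_simps)
    finally show "poly (of_int_poly (pCons k Pl)) (biq_emb p q s t a b c d) = biq_emb p q s t ?A ?B ?C ?D" .
  qed
qed

lemma key_bound:
  fixes a x y :: real
  assumes "a + x*y > 0" "a - x*y > 0" "4*x \<in> \<int>" "x \<noteq> 0" "y \<ge> 0"
  shows "4*a > y"
proof -
  have "1 \<le> \<bar>4*x\<bar>" using assms(3,4) by (intro Ints_nonzero_abs_ge1) auto
  then have "y \<le> \<bar>4*x\<bar> * y" using assms(5) by (metis mult_1 mult_right_mono)
  moreover have "a > \<bar>x\<bar> * y" using assms(1,2) by (cases "x \<ge> 0") auto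
  ultimately show ?thesis by (simp add: abs_mult)
qed

theorem lemma3:
  fixes p q :: nat and a b c d :: real
  assumes "p > 0" "q > 0" "squarefree p" "squarefree q"
    and "biq_degree4 p q"
    and "a \<in> \<rat>" "b \<in> \<rat>" "c \<in> \<rat>" "d \<in> \<rat>"
    and "algebraic_int (biq_elem p q a b c d)"
    and "biq_totally_positive p q a b c d"
  shows "(b \<noteq> 0 \<longrightarrow> biq_trace p q a b c d > sqrt p)
       \<and> (c \<noteq> 0 \<longrightarrow> biq_trace p q a b c d > sqrt q)
       \<and> (d \<noteq> 0 \<longrightarrow> biq_trace p q a b c d > sqrt (biq_r p q))
       \<and> (biq_elem p q a b c d \<notin> \<int> \<longrightarrow>
            biq_trace p q a b c d > min (sqrt p) (min (sqrt q) (sqrt (biq_r p q))))"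
proof -
  note pq = assms(1,2)
  have sig: "1 \<in> biq_signs" "-1 \<in> biq_signs" by (simp_all add: biq_signs_def)
  define E where "E = (\<lambda>s t. biq_emb p q s t a b c d)"
  have tp: "E s t > 0" if "s \<in> biq_signs" "t \<in> biq_signs" for s t
    using assms(11) that by (simp add: biq_totally_positive_def E_def)
  have E11: "E 1 1 = a + b * sqrt p + c * sqrt q + d * sqrt (biq_r p q)"
   and E12: "E 1 (-1) = a + b * sqrt p - c * sqrt q - d * sqrt (biq_r p q)"
   and E21: "E (-1) 1 = a - b * sqrt p + c * sqrt q - d * sqrt (biq_r p q)"
   and E22: "E (-1) (-1) = a - b * sqrt p - c * sqrt q + d * sqrt (biq_r p q)"
    by (simp_all add: E_def biq_emb_def)
  have pos: "E 1 1 > 0" "E 1 (-1) > 0" "E (-1) 1 > 0" "E (-1) (-1) > 0"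
    using tp sig by auto
  have tr: "biq_trace p q a b c d = 4 * a"
    by (simp add: biq_trace_def biq_signs_def biq_emb_def)
  obtain Pl :: "int poly" where Pl: "poly (of_int_poly Pl) (biq_elem p q a b c d) = 0" "lead_coeff Pl = 1"
    using assms(10) unfolding algebraic_int_altdef_ipoly by blast
  have elem: "biq_elem p q a b c d = E 1 1" by (simp add: biq_elem_def E11)
  obtain A B C D where ABCD: "A \<in> \<rat>" "B \<in> \<rat>" "C \<in> \<rat>" "D \<in> \<rat>"
    "\<forall>s\<in>biq_signs. \<forall>t\<in>biq_signs.
      poly (of_int_poly Pl) (biq_emb p q s t a b c d) = biq_emb p q s t A B C D"
    using poly_emb[OF pq assms(6-9), of Pl] by blast
  have h11: "poly (of_int_poly Pl) (biq_emb p q 1 1 a b c d) = biq_emb p q 1 1 A B C D"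
    using ABCD(5) sig by blast
  have "biq_elem p q A B C D = biq_emb p q 1 1 A B C D" by (simp add: biq_elem_def biq_emb_def)
  also have "\<dots> = poly (of_int_poly Pl) (biq_elem p q a b c d)"
    unfolding h11[symmetric] by (simp add: biq_elem_def biq_emb_def)
  finally have "biq_elem p q A B C D = 0" using Pl(1) by simp
  then have Z: "A = 0" "B = 0" "C = 0" "D = 0"
    using assms(5) ABCD(1-4) unfolding biq_degree4_def by blast+
  have roots: "poly (of_int_poly Pl) (E s t) = 0" if "s \<in> biq_signs" "t \<in> biq_signs" for s t
    using ABCD(5) that Z unfolding E_def by (simp add: biq_emb_def)
  define n where "n = degree Pl"
  have n0: "n > 0"
  proof (rule ccontr)
    assume "\<not> n > 0"
    then have "degree Pl = 0" by (simp add: n_def)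
    then have "Pl = [:1:]" using Pl(2) degree_0_id[of Pl] by simp
    then show False using Pl(1) by simp
  qed
  define rr where "rr = (\<lambda>i::nat. if i = 0 then E 1 1 else if i = 1 then E 1 (-1)
     else if i = 2 then E (-1) 1 else E (-1) (-1))"
  have rroots: "poly (of_int_poly Pl) (rr i) = 0" if "i < 4" for i
    using roots sig unfolding rr_def by auto
  define G where "G = (\<lambda>k. \<Prod>i<4. rr i ^ k i) ` PiE {..<4} (\<lambda>_. {..<n})"
  note RS = roots_stab[OF Pl(2) n_def[symmetric] n0 rroots G_def]
  have alg: "algebraic_int x" if "stab G x" for x
    using stab_alg[OF RS(1) RS(2) _ that] by simp
  have st: "stab G (E 1 1)" "stab G (E 1 (-1))" "stab G (E (-1) 1)" "stab G (E (-1) (-1))"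
    using RS(3)[of 0] RS(3)[of 1] RS(3)[of 2] RS(3)[of 3] by (simp_all add: rr_def)
  have sq: "stab G (x * x)" if "stab G x" for x using stab_mult[OF that that] .
  have rb: "(E 1 1 + E 1 (-1) - E (-1) 1 - E (-1) (-1)) = 4 * b * sqrt p"
    unfolding E11 E12 E21 E22 by simp
  have rc: "(E 1 1 - E 1 (-1) + E (-1) 1 - E (-1) (-1)) = 4 * c * sqrt q"
    unfolding E11 E12 E21 E22 by simp
  have rd: "(E 1 1 - E 1 (-1) - E (-1) 1 + E (-1) (-1)) = 4 * d * sqrt (biq_r p q)"
    unfolding E11 E12 E21 E22 by simp
  have "stab G ((E 1 1 + E 1 (-1) - E (-1) 1 - E (-1) (-1)) * (E 1 1 + E 1 (-1) - E (-1) 1 - E (-1) (-1)))"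
    using st by (intro sq stab_diff stab_add)
  then have "algebraic_int ((4*b * sqrt p)*(4*b * sqrt p))" unfolding rb using alg by simp
  moreover have "(4*b * sqrt p)*(4*b * sqrt p) = (4*b)^2 * (sqrt p)^2"
    by (simp add: power2_eq_square algebra_simps)
  ultimately have "algebraic_int ((4*b)^2 * of_nat p)" by simp
  moreover have "(4*b)^2 * of_nat p \<in> \<rat>" using assms(7) by simp
  ultimately have "(4*b)^2 * real p \<in> \<int>" by (rule rational_algebraic_int_is_int)
  moreover have "4 * b \<in> \<rat>" using assms(7) by simp
  ultimately have b4: "4 * b \<in> \<int>" using sqfree_rat_int[OF _ assms(3,1)] by blast
  have "stab G ((E 1 1 - E 1 (-1) + E (-1) 1 - E (-1) (-1)) * (E 1 1 - E 1 (-1) + E (-1) 1 - E (-1) (-1)))"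
    using st by (intro sq stab_diff stab_add)
  then have "algebraic_int ((4*c * sqrt q)*(4*c * sqrt q))" unfolding rc using alg by simp
  moreover have "(4*c * sqrt q)*(4*c * sqrt q) = (4*c)^2 * (sqrt q)^2"
    by (simp add: power2_eq_square algebra_simps)
  ultimately have "algebraic_int ((4*c)^2 * of_nat q)" by simp
  moreover have "(4*c)^2 * of_nat q \<in> \<rat>" using assms(8) by simp
  ultimately have "(4*c)^2 * real q \<in> \<int>" by (rule rational_algebraic_int_is_int)
  moreover have "4 * c \<in> \<rat>" using assms(8) by simp
  ultimately have c4: "4 * c \<in> \<int>" using sqfree_rat_int[OF _ assms(4,2)] by blast
  have rsf: "squarefree (biq_r p q)" and r0: "biq_r p q > 0"
  proof -
    have cop: "coprime (p div gcd p q) (q div gcd p q)" using pq by (intro div_gcd_coprime) auto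
    have "squarefree (p div gcd p q)" using assms(3)
      by (rule squarefree_mono[rotated]) (metis dvd_mult_div_cancel gcd_dvd1 gcd_dvd2 dvd_triv_right) 
    moreover have "squarefree (q div gcd p q)" using assms(4)
      by (rule squarefree_mono[rotated]) (metis dvd_mult_div_cancel gcd_dvd1 gcd_dvd2 dvd_triv_right)
    ultimately show "squarefree (biq_r p q)" using cop sqrt_rels(1)[OF pq]
      by (simp add: squarefree_mult_coprime)
    show "biq_r p q > 0" using sqrt_rels(1)[OF pq] pq
      by (simp add: div_greater_zero_iff gcd_le1_nat gcd_le2_nat)
  qed
  have "stab G ((E 1 1 - E 1 (-1) - E (-1) 1 + E (-1) (-1)) * (E 1 1 - E 1 (-1) - E (-1) 1 + E (-1) (-1)))"
    using st by (intro sq stab_diff stab_add)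
  then have "algebraic_int ((4*d * sqrt (biq_r p q))*(4*d * sqrt (biq_r p q)))" unfolding rd using alg by simp
  moreover have "(4*d * sqrt (biq_r p q))*(4*d * sqrt (biq_r p q)) = (4*d)^2 * (sqrt (biq_r p q))^2"
    by (simp add: power2_eq_square algebra_simps)
  ultimately have "algebraic_int ((4*d)^2 * of_nat (biq_r p q))" by simp
  moreover have "(4*d)^2 * of_nat (biq_r p q) \<in> \<rat>" using assms(9) by simp
  ultimately have "(4*d)^2 * real (biq_r p q) \<in> \<int>" by (rule rational_algebraic_int_is_int)
  moreover have "4 * d \<in> \<rat>" using assms(9) by simp
  ultimately have d4: "4 * d \<in> \<int>" using sqfree_rat_int[OF _ rsf r0] by blast
  have Bb: "b \<noteq> 0 \<longrightarrow> biq_trace p q a b c d > sqrt p"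
  proof
    assume "b \<noteq> 0"
    have "a + b * sqrt p > 0" using pos(1,2) unfolding E11 E12 by linarith
    moreover have "a - b * sqrt p > 0" using pos(3,4) unfolding E21 E22 by linarith
    ultimately show "biq_trace p q a b c d > sqrt p" unfolding tr
      using key_bound b4 \<open>b \<noteq> 0\<close> by simp
  qed
  have Bc: "c \<noteq> 0 \<longrightarrow> biq_trace p q a b c d > sqrt q"
  proof
    assume "c \<noteq> 0"
    have "a + c * sqrt q > 0" using pos(1,3) unfolding E11 E21 by linarith
    moreover have "a - c * sqrt q > 0" using pos(2,4) unfolding E12 E22 by linarith
    ultimately show "biq_trace p q a b c d > sqrt q" unfolding tr
      using key_bound c4 \<open>c \<noteq> 0\<close> by simp
  qed
  have Bd: "d \<noteq> 0 \<longrightarrow> biq_trace p q a b c d > sqrt (biq_r p q)"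
  proof
    assume "d \<noteq> 0"
    have "a + d * sqrt (biq_r p q) > 0" using pos(1,4) unfolding E11 E22 by linarith
    moreover have "a - d * sqrt (biq_r p q) > 0" using pos(2,3) unfolding E12 E21 by linarith
    ultimately show "biq_trace p q a b c d > sqrt (biq_r p q)" unfolding tr
      using key_bound d4 \<open>d \<noteq> 0\<close> by simp
  qed
  have Bm: "biq_elem p q a b c d \<notin> \<int> \<longrightarrow>
            biq_trace p q a b c d > min (sqrt p) (min (sqrt q) (sqrt (biq_r p q)))"
  proof
    assume ni: "biq_elem p q a b c d \<notin> \<int>"
    have "b \<noteq> 0 \<or> c \<noteq> 0 \<or> d \<noteq> 0"
    proof (rule ccontr)
      assume "\<not> (b \<noteq> 0 \<or> c \<noteq> 0 \<or> d \<noteq> 0)"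
      then have "biq_elem p q a b c d = a" by (simp add: biq_elem_def)
      then have "biq_elem p q a b c d \<in> \<int>"
        using rational_algebraic_int_is_int[OF assms(10)] assms(6) by simp
      then show False using ni by simp
    qed
    then show "biq_trace p q a b c d > min (sqrt p) (min (sqrt q) (sqrt (biq_r p q)))"
      using Bb Bc Bd by auto
  qed
  show ?thesis using Bb Bc Bd Bm by blast
qed

end
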